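(* Let $q$ be a power of $2$ and $n\ge1$ an integer with $\gcd(n+1,q(q^2-1))=1$. Then $C_n(a)$ is LCD for every $a\in\mathbb{F}_q$.
   Context: For $a\in\mathbb{F}_q$ and $n \ge 1$, $T_n(a)$ denotes the $n\times n$ symmetric tridiagonal Toeplitz matrix over $\mathbb{F}_q$ with all diagonal entries equal to $a$, all entries on the first super- and sub-diagonals equal to $1$, and all other entries $0$. $C_n(a)$ is the $[2n,n]$ linear code over $\mathbb{F}_q$ with generator matrix $[I_n \mid T_n(a)]$. A linear code $C$ is LCD if $C\cap C^\perp=\{0\}$ (Euclidean dual). *)

theory Defs
  imports Main
begin

text \<open>Vectors of length m over a field are modelled as functions nat \<Rightarrow> 'a
  vanishing outside the index set {0..<m}; matrices as functions nat \<Rightarrow> nat \<Rightarrow> 'a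
  (entries outside the index range are irrelevant).\<close>

definition vecs :: "nat \<Rightarrow> (nat \<Rightarrow> 'a::zero) set" where
  "vecs m = {v. \<forall>j\<ge>m. v j = 0}"

definition tridiag_toeplitz :: "nat \<Rightarrow> 'a::comm_ring_1 \<Rightarrow> nat \<Rightarrow> nat \<Rightarrow> 'a" where
  "tridiag_toeplitz n a i j =
     (if i < n \<and> j < n then
        (if i = j then a else if i = j + 1 \<or> j = i + 1 then 1 else 0)
      else 0)"

definition gen_matrix :: "nat \<Rightarrow> 'a::comm_ring_1 \<Rightarrow> nat \<Rightarrow> nat \<Rightarrow> 'a" where
  "gen_matrix n a i j =
     (if j < n then (if i = j then 1 else 0) else tridiag_toeplitz n a i (j - n))"

definition lin_code :: "nat \<Rightarrow> nat \<Rightarrow> (nat \<Rightarrow> nat \<Rightarrow> 'a::comm_ring_1) \<Rightarrow> (nat \<Rightarrow> 'a) set" where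
  "lin_code k m G = {(\<lambda>j. if j < m then (\<Sum>i<k. u i * G i j) else 0) | u. u \<in> vecs k}"

definition C_code :: "nat \<Rightarrow> 'a::comm_ring_1 \<Rightarrow> (nat \<Rightarrow> 'a) set" where
  "C_code n a = lin_code n (2 * n) (gen_matrix n a)"

definition dual_code :: "nat \<Rightarrow> (nat \<Rightarrow> 'a::comm_ring_1) set \<Rightarrow> (nat \<Rightarrow> 'a) set" where
  "dual_code m C = {v \<in> vecs m. \<forall>c\<in>C. (\<Sum>j<m. c j * v j) = 0}"

definition is_LCD :: "nat \<Rightarrow> (nat \<Rightarrow> 'a::comm_ring_1) set \<Rightarrow> bool" where
  "is_LCD m C \<longleftrightarrow> C \<inter> dual_code m C = {\<lambda>_. 0}"

end

theory Submission
  imports Defs "HOL-Number_Theory.Number_Theory" "HOL-Computational_Algebra.Polynomial"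
begin


lemma char2_of_card:
  assumes "card (UNIV :: 'a::{finite,field} set) = 2 ^ k"
  shows "(2::'a) = 0"
proof -
  have pos: "CHAR('a) > 0" by (rule finite_imp_CHAR_pos) simp
  have pr: "prime CHAR('a)" using prime_CHAR_semidom[OF pos] .
  have "CHAR('a) dvd 2 ^ k" using CHAR_dvd_CARD[where 'a='a] assms by simp
  hence "CHAR('a) dvd 2" using prime_dvd_power_nat[OF pr] by blast
  hence "CHAR('a) = 2" using pr dvd_imp_le[of "CHAR('a)" 2] prime_ge_2_nat[OF pr] by linarith
  thus ?thesis using of_nat_CHAR[where 'a='a] by simp
qed

lemma fermat_field:
  fixes x :: "'a :: {finite,field}"
  shows "x ^ card (UNIV :: 'a set) = x"
proof (cases "x = 0")
  case False
  have "x * (\<Prod>y\<in>UNIV-{0}. x * y) = x * x ^ (card (UNIV :: 'a set) - 1) * \<Prod>(UNIV-{0})"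
    by (simp add: prod.distrib mult_ac)
  also have "x * x ^ (card (UNIV :: 'a set) - 1) = x ^ Suc (card (UNIV :: 'a set) - 1)"
    by (subst power_Suc) auto
  also have "Suc (card (UNIV :: 'a set) - 1) = card (UNIV :: 'a set)"
    using finite_UNIV_card_ge_0[where ?'a = 'a] by simp
  also have "(\<Prod>y\<in>UNIV-{0}. x * y) = (\<Prod>y\<in>UNIV-{0}. y)"
    by (rule prod.reindex_bij_witness[of _ "\<lambda>y. y / x" "\<lambda>y. x * y"]) (use False in auto)
  finally show ?thesis
    by simp
qed (use finite_UNIV_card_ge_0[where ?'a = 'a] in auto)

lemma neg_char2: assumes "(2::'a::comm_ring_1) = 0" shows "- (x::'a) = x"
proof -
  have "x + x = 2 * x" by simp
  hence "x + x = 0" using assms by simp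
  thus ?thesis by (simp add: add_eq_0_iff)
qed

lemma poly_two: assumes "(2::'a::field) = 0" shows "(2::'a poly) = 0"
  by (metis assms of_nat_numeral of_nat_poly pCons_0_0)

lemma frob:
  assumes "(2::'a::field) = 0"
  shows "((f::'a poly) + g) ^ (2^k) = f ^ (2^k) + g ^ (2^k)"
proof (induction k)
  case 0 then show ?case by simp
next
  case (Suc k)
  have "(f + g) ^ (2 ^ Suc k) = ((f + g) ^ (2^k))^2" by (simp add: power_mult[symmetric] mult.commute)
  also have "\<dots> = (f ^ (2^k) + g ^ (2^k))^2" using Suc by simp
  also have "\<dots> = (f ^ (2^k))^2 + (g ^ (2^k))^2 + 2 * f ^ (2^k) * g ^ (2^k)"
    by (simp add: power2_eq_square algebra_simps)
  also have "\<dots> = (f ^ (2^k))^2 + (g ^ (2^k))^2" using poly_two[OF assms] by simp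
  also have "\<dots> = f ^ (2 ^ Suc k) + g ^ (2 ^ Suc k)" by (simp add: power_mult[symmetric] mult.commute)
  finally show ?case .
qed

lemma cong_by_smult: "(f::'a::field poly) - g = smult c p \<Longrightarrow> [f = g] (mod p)"
  unfolding cong_iff_dvd_diff by (simp add: dvd_smult)

fun D :: "'a::comm_ring_1 \<Rightarrow> nat \<Rightarrow> 'a" where
  "D b 0 = 1" | "D b (Suc 0) = b" | "D b (Suc (Suc k)) = b * D b (Suc k) + D b k"

lemma cassini:
  assumes "(2::'a::comm_ring_1) = 0"
  shows "D b (Suc k) ^ 2 + D b (Suc (Suc k)) * D b k = (1::'a)"
proof (induction k)
  case 0
  have "b * b + (b * b + 1) = 2 * (b*b) + (1::'a)" by (simp add: algebra_simps)
  then show ?case using assms by (simp add: power2_eq_square)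
next
  case (Suc k)
  have "D b (Suc (Suc k)) ^ 2 + D b (Suc (Suc (Suc k))) * D b (Suc k)
      = D b (Suc k) ^ 2 + D b (Suc (Suc k)) * D b k + 2 * (b * D b (Suc (Suc k)) * D b (Suc k))"
    by (simp add: power2_eq_square algebra_simps)
  then show ?case using Suc assms by simp
qed

lemma X_pow_D:
  fixes b :: "'a::field"
  assumes two: "(2::'a) = 0"
  shows "[[:0,1:] ^ (k+2) = [:D b k, D b (Suc k):]] (mod [:1,b,1:])"
proof (induction k)
  case 0
  have "[:0,1:] ^ 2 - [:1, b:] = [:1,b,1::'a:]"
    using neg_char2[OF two] two by (simp add: power2_eq_square)
  hence eq: "[:0,1:]^(0+2) - [:D b 0, D b (Suc 0):] = [:1,b,1:]" using two by simp
  show ?case unfolding cong_iff_dvd_diff by (simp only: eq dvd_refl)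
next
  case (Suc k)
  have "[[:0,1:] * [:0,1:] ^ (k+2) = [:0,1:] * [:D b k, D b (Suc k):]] (mod [:1,b,1:])"
    by (rule cong_mult[OF cong_refl Suc])
  moreover have "[:0,1:] * [:D b k, D b (Suc k):] - [:D b (Suc k), D b (Suc (Suc k)):]
     = smult (D b (Suc k)) [:1,b,1:]"
    using neg_char2[OF two] two by simp
  hence "[[:0,1:] * [:D b k, D b (Suc k):] = [:D b (Suc k), D b (Suc (Suc k)):]] (mod [:1,b,1:])"
    by (rule cong_by_smult)
  ultimately show ?case by (auto intro: cong_trans)
qed

lemma small_dvd:
  assumes "(p::'a::field poly) dvd [:c0, c1:]" "degree p = 2"
  shows "c0 = 0 \<and> c1 = 0"
proof (rule ccontr)
  assume "\<not> (c0 = 0 \<and> c1 = 0)"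
  hence "[:c0, c1:] \<noteq> 0" by auto
  from dvd_imp_degree_le[OF assms(1) this] assms(2) show False by (auto split: if_splits)
qed

lemma deg1_eq:
  assumes "degree (r::'a::zero poly) \<le> 1"
  shows "r = [:coeff r 0, coeff r 1:]"
proof (rule poly_eqI)
  fix i show "coeff r i = coeff [:coeff r 0, coeff r 1:] i"
  proof (cases i)
    case (Suc j) then show ?thesis using assms coeff_eq_0[of r i] by (cases j) auto
  qed simp
qed

lemma cong_pow_one:
  assumes "[(f::'a::field poly) ^ N = 1] (mod p)" "N dvd L"
  shows "[f ^ L = 1] (mod p)"
proof -
  obtain m where "L = N * m" using assms(2) by blast
  hence "f ^ L = (f ^ N) ^ m" by (simp add: power_mult)
  moreover have "[(f ^ N) ^ m = 1 ^ m] (mod p)" by (rule cong_pow[OF assms(1)])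
  ultimately show ?thesis by simp
qed

lemma X_pow_L:
  fixes b :: "'a::{finite,field}"
  assumes q: "card (UNIV :: 'a set) = 2^k"
  shows "[[:0,1:] ^ (card (UNIV :: 'a set) * (card (UNIV :: 'a set)^2 - 1)) = 1] (mod [:1,b,1:])"
proof -
  define q where "q = card (UNIV :: 'a set)"
  define X :: "'a poly" where "X = [:0,1:]"
  define p where "p = [:1,b,1:]"
  define Z where "Z = X + [:b:]"
  have two: "(2::'a) = 0" using char2_of_card[OF q] .
  have neg: "\<And>x::'a. - x = x" using neg_char2[OF two] .
  have "card {0,1::'a} \<le> card (UNIV::'a set)" by (rule card_mono) auto
  hence q2: "q \<ge> 2" unfolding q_def by simp
  have k1: "k \<ge> 1" using q2 q unfolding q_def by (cases k) auto
  have qk: "q = 2^k" using q q_def by simp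
  have degp: "degree p = 2" unfolding p_def by simp
  have ZX: "[X * Z = 1] (mod p)"
    by (rule cong_by_smult[where c=1]) (simp add: X_def Z_def p_def neg one_pCons)
  have "\<exists>N. N dvd q * (q^2 - 1) \<and> [X ^ N = 1] (mod p)"
  proof (cases "b = 0")
    case True
    have "[X ^ 2 = 1] (mod p)"
      by (rule cong_by_smult[where c=1]) (simp add: X_def p_def neg True power2_eq_square one_pCons)
    moreover have "2 dvd q * (q^2 - 1)" using k1 qk by (cases k) auto
    ultimately show ?thesis by blast
  next
    case False
    have p_eq: "p = X^2 + [:b:] * X + 1" by (simp add: X_def p_def power2_eq_square one_pCons)
    have bq: "b ^ q = b" unfolding q_def by (rule fermat_field)
    have "p ^ q = (X^2)^q + ([:b:] * X)^q + 1" unfolding p_eq qk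
      using frob[OF two] by simp
    also have "([:b:] * X)^q = [:b:] * X^q" by (simp only: power_mult_distrib poly_const_pow bq)
    also have "(X^2)^q = (X^q)^2" by (simp add: power_mult[symmetric] mult.commute)
    finally have pq: "p ^ q = (X^q)^2 + [:b:] * X^q + 1" .
    define r where "r = X^q mod p"
    have rc: "[r = X^q] (mod p)" unfolding r_def by (rule cong_mod_leftI[OF cong_refl])
    have "[r^2 + [:b:] * r + 1 = (X^q)^2 + [:b:] * X^q + 1] (mod p)"
      using rc by (intro cong_add cong_mult cong_pow cong_refl)
    moreover have "[p ^ q = 0] (mod p)" using q2 by (simp add: cong_iff_dvd_diff)
    ultimately have h: "[r^2 + [:b:] * r + 1 = 0] (mod p)" unfolding pq by (rule cong_trans)
    have pnz: "p \<noteq> 0" unfolding p_def by simp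
    have "degree r \<le> 1" unfolding r_def using degree_mod_less[OF pnz, of "X^q"] degp by auto
    hence req: "r = [:coeff r 0, coeff r 1:]" by (rule deg1_eq)
    define x where "x = coeff r 0"
    define y where "y = coeff r 1"
    have reqxy: "r = [:x, y:]" using req x_def y_def by simp
    have "r^2 + [:b:] * r + 1 - smult (y^2) p = [:x^2 + b*x + 1 - y^2, b*y - b*y^2:]"
      unfolding reqxy p_def using two by (simp add: power2_eq_square algebra_simps one_pCons)
    have "p dvd r^2 + [:b:] * r + 1" using h by (simp add: cong_0_iff)
    hence "p dvd r^2 + [:b:] * r + 1 - smult (y^2) p" by (simp add: dvd_smult)
    hence "p dvd [:x^2 + b*x + 1 - y^2, b*y - b*y^2:]"
      using \<open>r^2 + [:b:] * r + 1 - smult (y^2) p = _\<close> by simp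
    from small_dvd[OF this degp] have e0: "x^2 + b*x + 1 - y^2 = 0" and e1: "b*y - b*y^2 = 0" by auto
    from e1 False have "y * (1 - y) = 0" by (simp add: power2_eq_square algebra_simps)
    hence "y = 0 \<or> y = 1" by auto
    thus ?thesis
    proof
      assume y0: "y = 0"
      have c1: "[X^q = [:x:]] (mod p)" using rc reqxy y0 by (metis cong_sym pCons_0_0)
      have "X^(q*q) = (X^q)^q" by (simp add: power_mult)
      moreover have "[(X^q)^q = [:x:]^q] (mod p)" by (rule cong_pow[OF c1])
      moreover have "[:x:]^q = [:x:]" by (simp add: poly_const_pow q_def fermat_field)
      ultimately have c2: "[X^(q*q) = X^q] (mod p)" using c1 by (metis cong_sym cong_trans)
      have "[X^(q*(q-1)) * (X*Z)^q = X^(q*(q-1)) * 1^q] (mod p)"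
        by (intro cong_mult cong_refl cong_pow ZX)
      moreover have "X^(q*(q-1)) * (X*Z)^q = X^(q*q) * Z^q"
      proof -
        have "q*(q-1) + q = q*q" using q2 by (cases q) (auto simp: algebra_simps)
        thus ?thesis by (metis power_add power_mult_distrib mult.assoc)
      qed
      moreover have "[X^(q*q) * Z^q = X^q * Z^q] (mod p)" by (intro cong_mult cong_refl c2)
      moreover have "[X^q * Z^q = 1] (mod p)"
        using cong_pow[OF ZX, of q] by (simp add: power_mult_distrib)
      ultimately have "[X^(q*(q-1)) = 1] (mod p)" by (metis cong_sym cong_trans mult_1_right power_one)
      moreover have "q*(q-1) dvd q * (q^2 - 1)"
      proof -
        have "q^2 - 1 = (q-1)*(q+1)" using q2 by (simp add: power2_eq_square algebra_simps diff_mult_distrib)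
        thus ?thesis by (metis mult_dvd_mono dvd_refl dvd_triv_left)
      qed
      ultimately show ?thesis by blast
    next
      assume y1: "y = 1"
      from e0 y1 have "x * (x + b) = 0" by (simp add: power2_eq_square algebra_simps)
      hence "x = 0 \<or> x = - b" by (auto simp: add_eq_0_iff)
      thus ?thesis
      proof
        assume x0: "x = 0"
        have c1: "[X^q = X] (mod p)" using rc reqxy y1 x0 X_def by (metis cong_sym)
        have "[X^(q-1) * (X*Z) = X^(q-1) * 1] (mod p)" by (intro cong_mult cong_refl ZX)
        moreover have "X^(q-1) * (X*Z) = X^q * Z"
          using q2 by (metis mult.assoc power_Suc2 Suc_diff_1 less_le_trans zero_less_numeral)
        moreover have "[X^q * Z = X * Z] (mod p)" by (intro cong_mult cong_refl c1)
        ultimately have "[X^(q-1) = 1] (mod p)" using ZX by (metis cong_sym cong_trans mult_1_right)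
        moreover have "q - 1 dvd q * (q^2 - 1)"
        proof -
          have "q^2 - 1 = (q-1)*(q+1)" using q2 by (simp add: power2_eq_square algebra_simps diff_mult_distrib)
          thus ?thesis by (metis dvd_mult dvd_triv_left)
        qed
        ultimately show ?thesis by blast
      next
        assume xb: "x = - b"
        have "r = Z" using reqxy y1 xb neg unfolding Z_def X_def by simp
        hence c1: "[X^q = Z] (mod p)" using rc by (metis cong_sym)
        have "[X^q * X = Z * X] (mod p)" by (intro cong_mult cong_refl c1)
        hence "[X^(q+1) = 1] (mod p)" using ZX by (metis cong_trans power_Suc2 Suc_eq_plus1 mult.commute)
        moreover have "q + 1 dvd q * (q^2 - 1)"
        proof -
          have "q^2 - 1 = (q-1)*(q+1)" using q2 by (simp add: power2_eq_square algebra_simps diff_mult_distrib)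
          thus ?thesis by (metis dvd_mult dvd_triv_right)
        qed
        ultimately show ?thesis by blast
      qed
    qed
  qed
  then obtain N where "N dvd q * (q^2 - 1)" "[X ^ N = 1] (mod p)" by blast
  from cong_pow_one[OF this(2) this(1)] show ?thesis unfolding X_def p_def q_def .
qed

lemma D_nz:
  fixes b :: "'a::{finite,field}"
  assumes q: "card (UNIV :: 'a set) = 2^k" and n: "n \<ge> 1"
    and g: "gcd (n + 1) (card (UNIV :: 'a set) * (card (UNIV :: 'a set) ^ 2 - 1)) = 1"
  shows "D b n \<noteq> 0"
proof
  assume Dn: "D b n = 0"
  define L where "L = card (UNIV :: 'a set) * (card (UNIV :: 'a set) ^ 2 - 1)"
  define X :: "'a poly" where "X = [:0,1:]"
  define p where "p = [:1,b,1:]"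
  obtain m where nm: "n = Suc m" using n by (cases n) auto
  have two: "(2::'a) = 0" using char2_of_card[OF q] .
  have "D b (Suc m) ^ 2 + D b (Suc (Suc m)) * D b m = 1" by (rule cassini[OF two])
  hence dm: "D b m * D b m = 1" using Dn nm by simp
  have "(D b m - 1) * (D b m - 1) = D b m * D b m - 2 * D b m + 1" by (simp add: algebra_simps)
  also have "\<dots> = 0" using dm two by simp
  finally have dm1: "D b m = 1" by simp
  have "[X ^ (m+2) = [:D b m, D b (Suc m):]] (mod p)" unfolding X_def p_def by (rule X_pow_D[OF two])
  hence c1: "[X ^ (n+1) = 1] (mod p)" using dm1 Dn nm by (simp add: one_pCons)
  have cL: "[X ^ L = 1] (mod p)" unfolding X_def p_def L_def by (rule X_pow_L[OF q])
  obtain u v where uv: "(n+1) * u = L * v + gcd (n+1) L" using bezout_nat[of "n+1" L] by auto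
  hence uv': "(n+1) * u = L * v + 1" using g L_def by simp
  have "[(X ^ (n+1)) ^ u = 1 ^ u] (mod p)" by (rule cong_pow[OF c1])
  moreover have "(X ^ (n+1)) ^ u = X ^ (L * v + 1)" by (simp only: power_mult[symmetric] uv')
  ultimately have A: "[X ^ (L * v + 1) = 1] (mod p)" by simp
  have "[(X ^ L) ^ v * X = 1 ^ v * X] (mod p)" by (intro cong_mult cong_pow cL cong_refl)
  moreover have "(X ^ L) ^ v * X = X ^ (L * v + 1)" by (simp only: power_mult power_add power_one_right)
  ultimately have "[X ^ (L * v + 1) = X] (mod p)" by simp
  hence "[X = 1] (mod p)" using A by (metis cong_sym cong_trans)
  hence "p dvd X - 1" by (simp add: cong_iff_dvd_diff)
  hence "p dvd [:-1, 1:]" by (simp add: X_def one_pCons)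
  from small_dvd[OF this] show False by (simp add: p_def)
qed

definition opT :: "nat \<Rightarrow> 'a::comm_ring_1 \<Rightarrow> (nat \<Rightarrow> 'a) \<Rightarrow> nat \<Rightarrow> 'a" where
  "opT n b w m = (if m < n then (if m = 0 then 0 else w (m-1)) + b * w m + w (Suc m) else 0)"

lemma T_sym: "tridiag_toeplitz n b i j = tridiag_toeplitz n b j i"
  unfolding tridiag_toeplitz_def by auto

lemma sum_T:
  fixes w :: "nat \<Rightarrow> 'a::comm_ring_1"
  assumes w: "w \<in> vecs n" and m: "m < n"
  shows "(\<Sum>k<n. tridiag_toeplitz n b m k * w k) = opT n b w m"
proof -
  have "(\<Sum>k<n. tridiag_toeplitz n b m k * w k) =
        (\<Sum>k<n. (if k = m then b * w k else 0) + (if Suc k = m then w k else 0) + (if k = Suc m then w k else 0))"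
    by (rule sum.cong) (auto simp: tridiag_toeplitz_def m)
  also have "\<dots> = (\<Sum>k<n. if k = m then b * w k else 0) + (\<Sum>k<n. if Suc k = m then w k else 0)
      + (\<Sum>k<n. if k = Suc m then w k else 0)"
    by (simp add: sum.distrib)
  also have "(\<Sum>k<n. if k = m then b * w k else 0) = b * w m" using m by (simp add: sum.delta)
  also have "(\<Sum>k<n. if k = Suc m then w k else 0) = w (Suc m)"
    using w by (simp add: sum.delta vecs_def)
  also have "(\<Sum>k<n. if Suc k = m then w k else 0) = (if m = 0 then 0 else w (m - 1))"
  proof (cases m)
    case (Suc j)
    have "(\<Sum>k<n. if Suc k = m then w k else 0) = (\<Sum>k<n. if k = j then w k else 0)"
      by (rule sum.cong) (auto simp: Suc)
    also have "\<dots> = w j" using m Suc by (simp add: sum.delta)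
    finally show ?thesis using Suc by simp
  qed simp
  finally show ?thesis unfolding opT_def using m by (simp add: algebra_simps)
qed

lemma opT_inj:
  fixes w :: "nat \<Rightarrow> 'a::field"
  assumes two: "(2::'a) = 0" and w: "w \<in> vecs n" and z: "\<And>m. m < n \<Longrightarrow> opT n b w m = 0"
    and Dn: "D b n \<noteq> 0"
  shows "w = (\<lambda>_. 0)"
proof (cases "n = 0")
  case True thus ?thesis using w by (auto simp: vecs_def)
next
  case False
  have neg: "\<And>x::'a. - x = x" using neg_char2[OF two] .
  have eqs: "\<And>x y::'a. x + y = 0 \<Longrightarrow> y = x" using neg by (metis add_eq_0_iff)
  have claim: "Suc k \<le> n \<longrightarrow> w k = w 0 * D b k \<and> w (Suc k) = w 0 * D b (Suc k)" for k
  proof (induction k)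
    case 0
    show ?case
    proof
      assume "Suc 0 \<le> n"
      hence "opT n b w 0 = 0" using z by simp
      hence "b * w 0 + w (Suc 0) = 0" using \<open>n \<noteq> 0\<close> by (simp add: opT_def)
      hence "w (Suc 0) = b * w 0" by (rule eqs)
      thus "w 0 = w 0 * D b 0 \<and> w (Suc 0) = w 0 * D b (Suc 0)" by (simp add: mult.commute)
    qed
  next
    case (Suc k)
    show ?case
    proof
      assume sk: "Suc (Suc k) \<le> n"
      with Suc have ih: "w k = w 0 * D b k" "w (Suc k) = w 0 * D b (Suc k)" by auto
      have "opT n b w (Suc k) = 0" using z sk by simp
      hence "(w k + b * w (Suc k)) + w (Suc (Suc k)) = 0" using sk by (simp add: opT_def)
      hence "w (Suc (Suc k)) = w k + b * w (Suc k)" by (rule eqs)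
      thus "w (Suc k) = w 0 * D b (Suc k) \<and> w (Suc (Suc k)) = w 0 * D b (Suc (Suc k))"
        using ih by (simp add: algebra_simps)
    qed
  qed
  obtain m where nm: "n = Suc m" using False by (cases n) auto
  have "w n = w 0 * D b n" using claim[of m] nm by simp
  moreover have "w n = 0" using w by (simp add: vecs_def)
  ultimately have w0: "w 0 = 0" using Dn by simp
  show ?thesis
  proof
    fix k show "w k = 0"
    proof (cases "k < n")
      case True thus ?thesis using claim[of k] w0 by simp
    next
      case False thus ?thesis using w by (simp add: vecs_def)
    qed
  qed
qed


lemma sum_split: "(\<Sum>j<(n::nat)+m. f j) = (\<Sum>j<n. f j) + (\<Sum>k<m. f (n + k))"
  by (induction m) (simp_all add: algebra_simps)

lemma opT_vecs: "opT n b w \<in> vecs n"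
  by (simp add: vecs_def opT_def)

lemma opT_add: "opT n b (\<lambda>k. w1 k + w2 k) m = opT n b w1 m + opT n b w2 m"
  by (simp add: opT_def algebra_simps)

lemma opT_zero: "opT n b (\<lambda>_. 0) = (\<lambda>_. 0)"
  by (simp add: opT_def fun_eq_iff)

lemma opT_shift:
  assumes "w \<in> vecs n"
  shows "opT n (b + 1) w = (\<lambda>m. opT n b w m + w m)"
  using assms by (auto simp: opT_def vecs_def fun_eq_iff algebra_simps)

lemma code_eval:
  fixes u :: "nat \<Rightarrow> 'a::comm_ring_1"
  assumes u: "u \<in> vecs n"
  shows "(\<lambda>j. if j < 2*n then (\<Sum>i<n. u i * gen_matrix n a i j) else 0)
       = (\<lambda>j. if j < n then u j else if j < 2*n then opT n a u (j - n) else 0)"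
proof
  fix j
  show "(if j < 2*n then (\<Sum>i<n. u i * gen_matrix n a i j) else 0)
       = (if j < n then u j else if j < 2*n then opT n a u (j - n) else 0)"
  proof (cases "j < n")
    case True
    have "(\<Sum>i<n. u i * gen_matrix n a i j) = (\<Sum>i<n. if i = j then u i else 0)"
      by (rule sum.cong) (auto simp: gen_matrix_def True)
    also have "\<dots> = u j" using True by (simp add: sum.delta)
    finally show ?thesis using True by simp
  next
    case False
    show ?thesis
    proof (cases "j < 2*n")
      case True
      have "(\<Sum>i<n. u i * gen_matrix n a i j) = (\<Sum>i<n. tridiag_toeplitz n a (j-n) i * u i)"
        by (rule sum.cong) (auto simp: gen_matrix_def False T_sym mult.commute)
      also have "\<dots> = opT n a u (j - n)" using True False by (intro sum_T u) auto
      finally show ?thesis using True False by simp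
    qed (use False in simp)
  qed
qed

lemma main_lin:
  fixes a :: "'a::field"
  assumes two: "(2::'a) = 0" and Dnz: "\<And>b. D b n \<noteq> (0::'a)"
  shows "is_LCD (2 * n) (C_code n a)"
  unfolding is_LCD_def
proof (intro equalityI subsetI)
  fix x :: "nat \<Rightarrow> 'a" assume "x \<in> {\<lambda>_. 0}"
  hence x: "x = (\<lambda>_. 0)" by simp
  have "x \<in> C_code n a"
    unfolding C_code_def lin_code_def x
    by (rule CollectI, rule exI[of _ "\<lambda>_. 0"]) (auto simp: vecs_def fun_eq_iff)
  moreover have "x \<in> dual_code (2*n) (C_code n a)" unfolding dual_code_def x by (simp add: vecs_def)
  ultimately show "x \<in> C_code n a \<inter> dual_code (2 * n) (C_code n a)" by simp
next
  fix c assume "c \<in> C_code n a \<inter> dual_code (2 * n) (C_code n a)"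
  hence cC: "c \<in> C_code n a" and cD: "c \<in> dual_code (2 * n) (C_code n a)" by auto
  from cC obtain u where u: "u \<in> vecs n"
    and c: "c = (\<lambda>j. if j < 2*n then (\<Sum>i<n. u i * gen_matrix n a i j) else 0)"
    unfolding C_code_def lin_code_def by blast
  have ceq: "c = (\<lambda>j. if j < n then u j else if j < 2*n then opT n a u (j - n) else 0)"
    using c code_eval[OF u] by simp
  define v where "v = opT n a u"
  have v: "v \<in> vecs n" unfolding v_def by (rule opT_vecs)
  have allD: "\<forall>c'\<in>C_code n a. (\<Sum>j<2*n. c' j * c j) = 0"
    using cD unfolding dual_code_def by blast
  have cond: "u m + opT n a v m = 0" if m: "m < n" for m
  proof -
    define e :: "nat \<Rightarrow> 'a" where "e = (\<lambda>i. if i = m then 1 else 0)"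
    have e: "e \<in> vecs n" using m by (auto simp: e_def vecs_def)
    have "(\<lambda>j. if j < 2*n then (\<Sum>i<n. e i * gen_matrix n a i j) else 0) \<in> C_code n a"
      unfolding C_code_def lin_code_def using e by blast
    hence ec: "(\<lambda>j. if j < n then e j else if j < 2*n then opT n a e (j - n) else 0) \<in> C_code n a"
      using code_eval[OF e] by simp
    have "(\<Sum>j<2*n. (if j < n then e j else if j < 2*n then opT n a e (j - n) else 0) * c j) = 0"
      using bspec[OF allD ec] by simp
    also have "(\<Sum>j<2*n. (if j < n then e j else if j < 2*n then opT n a e (j - n) else 0) * c j)
       = (\<Sum>j<n. e j * u j) + (\<Sum>k<n. opT n a e k * v k)"
      unfolding mult_2 sum_split ceq v_def by simp
    also have "(\<Sum>j<n. e j * u j) = (\<Sum>j<n. if j = m then u j else 0)"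
      by (rule sum.cong) (auto simp: e_def)
    also have "\<dots> = u m" using m by (simp add: sum.delta)
    also have "(\<Sum>k<n. opT n a e k * v k) = (\<Sum>k<n. tridiag_toeplitz n a m k * v k)"
    proof (rule sum.cong)
      fix k assume k: "k \<in> {..<n}"
      have "opT n a e k = (\<Sum>i<n. tridiag_toeplitz n a k i * e i)" using k e by (simp add: sum_T)
      also have "\<dots> = (\<Sum>i<n. if i = m then tridiag_toeplitz n a k i else 0)"
        by (rule sum.cong) (auto simp: e_def)
      also have "\<dots> = tridiag_toeplitz n a m k" using m by (simp add: sum.delta T_sym)
      finally show "opT n a e k * v k = tridiag_toeplitz n a m k * v k" by simp
    qed simp
    also have "\<dots> = opT n a v m" using m v by (simp add: sum_T)
    finally show ?thesis .
  qed
  have S1: "opT n (a+1) u \<in> vecs n" by (rule opT_vecs)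
  have "opT n (a+1) (opT n (a+1) u) m = 0" if m: "m < n" for m
  proof -
    have Su: "opT n (a+1) u = (\<lambda>k. v k + u k)" using opT_shift[OF u] v_def by simp
    have "opT n (a+1) (opT n (a+1) u) m = opT n a (opT n (a+1) u) m + opT n (a+1) u m"
      using opT_shift[OF S1] by simp
    also have "\<dots> = opT n a (\<lambda>k. v k + u k) m + (v m + u m)" unfolding Su by simp
    also have "\<dots> = (u m + opT n a v m) + 2 * v m" by (simp add: opT_add v_def algebra_simps)
    also have "\<dots> = 0" using cond[OF m] two by simp
    finally show ?thesis .
  qed
  hence "opT n (a+1) u = (\<lambda>_. 0)" by (rule opT_inj[OF two S1 _ Dnz])
  hence u0: "u = (\<lambda>_. 0)" by (intro opT_inj[OF two u _ Dnz[of "a+1"]]) simp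
  show "c \<in> {\<lambda>_. 0}" unfolding ceq u0 by (simp add: opT_zero fun_eq_iff)
qed


theorem corollary2p3:
  fixes a :: "'a::{finite,field}" and n :: nat
  assumes "\<exists>k. card (UNIV :: 'a set) = 2 ^ k"
    and "n \<ge> 1"
    and "gcd (n + 1) (card (UNIV :: 'a set) * (card (UNIV :: 'a set) ^ 2 - 1)) = 1"
  shows "is_LCD (2 * n) (C_code n a)"
proof -
  obtain k where q: "card (UNIV :: 'a set) = 2 ^ k" using assms(1) by blast
  show ?thesis
  proof (rule main_lin)
    show "(2::'a) = 0" by (rule char2_of_card[OF q])
    fix b :: 'a show "D b n \<noteq> 0" by (rule D_nz[OF q assms(2) assms(3)])
  qed
qed

end
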